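(* Let $I$ be an ideal of a commutative ring $A$ and let $b\in A$ be such that $b^n\in I^n$ for all sufficiently large positive integers $n$. Then $b\in{}^*I$.
   Context: For an ideal $I$ of $A$, an element $b\in A$ is weakly subintegral over $I$ if there exist $q\in\mathbb{N}$ and elements $a_i\in I^i$ ($1\le i\le 2q+1$) such that $b^n+\sum_{i=1}^n\binom{n}{i}a_ib^{n-i}=0$ for all $n$ with $q+1\le n\le 2q+1$. The weak subintegral closure ${}^*I$ of $I$ is the set of elements of $A$ weakly subintegral over $I$. *)

theory Defs
  imports Main
begin

definition is_ideal :: "'a::comm_ring_1 set \<Rightarrow> bool" where
  "is_ideal I \<longleftrightarrow> 0 \<in> I \<and> (\<forall>x\<in>I. \<forall>y\<in>I. x + y \<in> I) \<and> (\<forall>r x. x \<in> I \<longrightarrow> r * x \<in> I)"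

inductive_set ideal_prod :: "'a::comm_ring_1 set \<Rightarrow> 'a set \<Rightarrow> 'a set" for I J where
  zero: "0 \<in> ideal_prod I J"
| mult: "x \<in> I \<Longrightarrow> y \<in> J \<Longrightarrow> x * y \<in> ideal_prod I J"
| add: "u \<in> ideal_prod I J \<Longrightarrow> v \<in> ideal_prod I J \<Longrightarrow> u + v \<in> ideal_prod I J"

primrec ideal_power :: "'a::comm_ring_1 set \<Rightarrow> nat \<Rightarrow> 'a set" where
  "ideal_power I 0 = UNIV"
| "ideal_power I (Suc n) = ideal_prod I (ideal_power I n)"

definition weakly_subintegral :: "'a::comm_ring_1 set \<Rightarrow> 'a \<Rightarrow> bool" where
  "weakly_subintegral I b \<longleftrightarrow>
     (\<exists>q::nat. q \<ge> 1 \<and> (\<exists>a::nat \<Rightarrow> 'a.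
        (\<forall>i\<in>{1..2*q+1}. a i \<in> ideal_power I i) \<and>
        (\<forall>n\<in>{q+1..2*q+1}.
           b ^ n + (\<Sum>i=1..n. of_nat (n choose i) * a i * b ^ (n - i)) = 0)))"

definition weak_subintegral_closure :: "'a::comm_ring_1 set \<Rightarrow> 'a set" where
  "weak_subintegral_closure I = {b. weakly_subintegral I b}"

end

theory Submission
  imports Defs
begin

lemma ideal_prod_absorb:
  assumes "is_ideal I" "u \<in> ideal_prod I J"
  shows "r * u \<in> ideal_prod I J"
  using assms(2)
proof induction
  case zero then show ?case by (simp add: ideal_prod.zero)
next
  case (mult x y)
  have "r * x \<in> I" using assms(1) mult(1) unfolding is_ideal_def by blast
  then have "(r * x) * y \<in> ideal_prod I J" using mult(2) by (rule ideal_prod.mult)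
  then show ?case by (simp add: mult.assoc)
next
  case (add u v) then show ?case by (simp add: distrib_left ideal_prod.add)
qed

lemma ideal_power_absorb:
  assumes "is_ideal I" "u \<in> ideal_power I n"
  shows "r * u \<in> ideal_power I n"
  using assms by (cases n) (auto intro: ideal_prod_absorb)

lemma ideal_power_zero: "0 \<in> ideal_power I n"
  by (cases n) (auto intro: ideal_prod.zero)

lemma coeffs_exist:
  fixes q :: nat
  shows "\<exists>c::nat \<Rightarrow> int. c 0 = 1 \<and> (\<forall>i. 1 \<le> i \<and> i \<le> q \<longrightarrow> c i = 0) \<and>
     (\<forall>n. q + 1 \<le> n \<and> n \<le> m \<longrightarrow> (\<Sum>i=0..n. of_nat (n choose i) * c i) = 0)"
proof (induction m)
  case 0
  show ?case by (rule exI[of _ "\<lambda>i. if i = 0 then 1 else 0"]) auto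
next
  case (Suc m)
  then obtain c :: "nat \<Rightarrow> int" where c0: "c 0 = 1" and cq: "\<forall>i. 1 \<le> i \<and> i \<le> q \<longrightarrow> c i = 0"
    and cs: "\<forall>n. q + 1 \<le> n \<and> n \<le> m \<longrightarrow> (\<Sum>i=0..n. of_nat (n choose i) * c i) = 0" by blast
  show ?case
  proof (cases "Suc m \<le> q")
    case True
    then show ?thesis using c0 cq cs by (intro exI[of _ c]) auto
  next
    case False
    define d where "d = c(Suc m := - (\<Sum>i=0..m. of_nat (Suc m choose i) * c i))"
    have d0: "d 0 = 1" using c0 by (simp add: d_def)
    have dq: "\<forall>i. 1 \<le> i \<and> i \<le> q \<longrightarrow> d i = 0" using cq False by (auto simp: d_def)
    have ds: "(\<Sum>i=0..n. of_nat (n choose i) * d i) = 0" if "q + 1 \<le> n" "n \<le> Suc m" for n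
    proof (cases "n = Suc m")
      case True
      have "(\<Sum>i=0..Suc m. of_nat (Suc m choose i) * d i)
          = (\<Sum>i=0..m. of_nat (Suc m choose i) * d i) + d (Suc m)"
        by (simp add: sum.atLeast0_atMost_Suc)
      also have "(\<Sum>i=0..m. of_nat (Suc m choose i) * d i) = (\<Sum>i=0..m. of_nat (Suc m choose i) * c i)"
        by (rule sum.cong) (auto simp: d_def)
      finally show ?thesis using True by (simp add: d_def)
    next
      case False
      then have "n \<le> m" using that by simp
      have "(\<Sum>i=0..n. of_nat (n choose i) * d i) = (\<Sum>i=0..n. of_nat (n choose i) * c i)"
        by (rule sum.cong) (use \<open>n \<le> m\<close> in \<open>auto simp: d_def\<close>)
      then show ?thesis using cs that \<open>n \<le> m\<close> by simp
    qed
    show ?thesis using d0 dq ds by blast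
  qed
qed

theorem mainTheorem10:
  fixes I :: "'a::comm_ring_1 set" and b :: 'a
  assumes "is_ideal I"
    and "\<exists>N. \<forall>n\<ge>N. n > 0 \<longrightarrow> b ^ n \<in> ideal_power I n"
  shows "b \<in> weak_subintegral_closure I"
proof -
  obtain N where N: "\<forall>n\<ge>N. n > 0 \<longrightarrow> b ^ n \<in> ideal_power I n" using assms(2) by blast
  define q where "q = max N 1"
  obtain c :: "nat \<Rightarrow> int" where c0: "c 0 = 1" and cq: "\<forall>i. 1 \<le> i \<and> i \<le> q \<longrightarrow> c i = 0"
    and cs: "\<forall>n. q + 1 \<le> n \<and> n \<le> 2*q+1 \<longrightarrow> (\<Sum>i=0..n. of_nat (n choose i) * c i) = 0"
    using coeffs_exist[of q "2*q+1"] by blast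
  define a where "a i = of_int (c i) * b ^ i" for i
  have A: "a i \<in> ideal_power I i" if "i \<in> {1..2*q+1}" for i
  proof (cases "i \<le> q")
    case True
    then show ?thesis using cq that by (simp add: a_def ideal_power_zero)
  next
    case False
    then have "N \<le> i" "i > 0" using q_def by auto
    then have "b ^ i \<in> ideal_power I i" using N by blast
    then show ?thesis unfolding a_def by (rule ideal_power_absorb[OF assms(1)])
  qed
  have E: "b ^ n + (\<Sum>i=1..n. of_nat (n choose i) * a i * b ^ (n - i)) = 0"
    if "n \<in> {q+1..2*q+1}" for n
  proof -
    have "(\<Sum>i=1..n. of_nat (n choose i) * a i * b ^ (n - i))
        = (\<Sum>i=1..n. of_int (of_nat (n choose i) * c i) * b ^ n)"
    proof (rule sum.cong)
      fix i assume "i \<in> {1..n}"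
      then have "b ^ i * b ^ (n - i) = b ^ n" by (simp add: power_add[symmetric])
      have "of_nat (n choose i) * a i * b ^ (n - i) = (of_nat (n choose i) * of_int (c i)) * (b ^ i * b ^ (n - i))"
        unfolding a_def by (simp only: mult.assoc)
      also have "\<dots> = of_int (of_nat (n choose i) * c i) * b ^ n"
        using \<open>b ^ i * b ^ (n - i) = b ^ n\<close> by simp
      finally show "of_nat (n choose i) * a i * b ^ (n - i) = of_int (of_nat (n choose i) * c i) * b ^ n" .
    qed simp
    also have "\<dots> = of_int (\<Sum>i=1..n. of_nat (n choose i) * c i) * b ^ n"
      by (simp add: sum_distrib_right)
    finally have 1: "(\<Sum>i=1..n. of_nat (n choose i) * a i * b ^ (n - i))
        = of_int (\<Sum>i=1..n. of_nat (n choose i) * c i) * b ^ n" .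
    have "(\<Sum>i=0..n. of_nat (n choose i) * c i) = 1 + (\<Sum>i=1..n. of_nat (n choose i) * c i)"
      using c0 by (simp add: sum.atLeast_Suc_atMost)
    then have "(\<Sum>i=1..n. of_nat (n choose i) * c i) = -1" using cs that by auto
    then show ?thesis using 1 by simp
  qed
  have "q \<ge> 1" by (simp add: q_def)
  then show ?thesis unfolding weak_subintegral_closure_def weakly_subintegral_def
    using A E by blast
qed

end
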